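(* Let $k$ be a field, $R=k[x_1,\ldots,x_n]$, and let $I\subset R$ be a strongly stable monomial ideal whose last generator is $M_\omega=x^\omega$ with $\omega=(\omega_1,\ldots,\omega_\mu)\in\mathbb{Z}^\mu_{\ge0}$, $\omega_\mu>0$, where $\mu\ge 2$. Suppose $I$ contains $x_{\mu-1}^t$ for some $t>0$. Then \[ |\mathcal{I}_{\mu-1}|\le \sum_{\alpha\in\mathcal{I}_{\mu-2}} f_{\mu-1}(\alpha), \] with equality if and only if $\omega=(0,\ldots,0,\omega_\mu)$, i.e. $M_\omega=x_\mu^{\omega_\mu}$. In particular $\mathcal{I}_{\mu-1}$ is a finite set.
   Context: Monomial order: degree reverse lexicographic. For monomials $M=x^\alpha$, $N=x^\beta$ in $R$, $M>N$ iff $\deg M>\deg N$, or $\deg M=\deg N$ and for the largest index $s$ with $\alpha_s\ne\beta_s$ one has $\alpha_s<\beta_s$. For $\alpha\in\mathbb{Z}^s_{\ge0}$ ($s\le n$) write $x^\alpha=x_1^{\alpha_1}\cdots x_s^{\alpha_s}$ and $|\alpha|=\sum\alpha_j$; for $\alpha,\beta\in\mathbb{Z}^s_{\ge0}$ set $\alpha\le\beta$ iff $x^\alpha\le x^\beta$. A monomial ideal $I$ is strongly stable if for every monomial $M$, $x_iM\in I$ implies $x_jM\in I$ for all $j<i$. $\mathcal{G}(I)$ denotes the minimal set of monomial generators. For a monomial $M$, $\max M$ is the largest $i$ with $x_i\mid M$. The last generator $M_\omega$ of $I$ is the element of $\mathcal{G}(I)$ of maximal degree which is smallest (in the order) among elements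 of $\mathcal{G}(I)$ of that degree; $\mu=\max M_\omega$. Define $f_1=\min\{t: x_1^t\in I\}$ and, for $2\le i\le\mu$ and $\alpha\in\mathbb{Z}^{i-1}_{\ge0}$, $f_i(\alpha)=\min\{t\ge0: x^\alpha x_i^t\in I\}\in\mathbb{Z}_{\ge0}\cup\{\infty\}$ (minimum of the empty set is $\infty$). For $1\le i\le\mu-2$, $\mathcal{I}_i$ is the set of $(\alpha_1,\ldots,\alpha_i)\in\mathbb{Z}^i_{\ge0}$ with $0\le\alpha_1<f_1$ and $0\le\alpha_j<f_j(\alpha_1,\ldots,\alpha_{j-1})$ for $2\le j\le i$; $\mathcal{I}_{\mu-1}$ is the set of $(\alpha_1,\ldots,\alpha_{\mu-1})\in\mathbb{Z}^{\mu-1}_{\ge0}$ satisfying the same inequalities for $j\le\mu-1$ and additionally $(\alpha_1,\ldots,\alpha_{\mu-1})\ge(\omega_1,\ldots,\omega_{\mu-1})$. Convention: $\mathcal{I}_0$ consists of the empty tuple, on which $f_1$ takes the value $f_1$. *)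

theory Defs
  imports Main "HOL-Library.Extended_Nat"
begin

text \<open>Monomials of R = k[x_1,...,x_n] are represented by exponent vectors
  a :: nat \<Rightarrow> nat supported on {1..n}. A monomial ideal is represented by
  the set of (exponent vectors of) monomials it contains.\<close>

definition monomials :: "nat \<Rightarrow> (nat \<Rightarrow> nat) set" where
  "monomials n = {a. \<forall>i. i \<notin> {1..n} \<longrightarrow> a i = 0}"

definition mdeg :: "nat \<Rightarrow> (nat \<Rightarrow> nat) \<Rightarrow> nat" where
  "mdeg n a = (\<Sum>i\<in>{1..n}. a i)"

text \<open>Degree reverse lexicographic order: mon_less n a b means x^a < x^b.\<close>
definition mon_less :: "nat \<Rightarrow> (nat \<Rightarrow> nat) \<Rightarrow> (nat \<Rightarrow> nat) \<Rightarrow> bool" where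
  "mon_less n a b \<longleftrightarrow> mdeg n a < mdeg n b \<or>
     (mdeg n a = mdeg n b \<and> (\<exists>s\<in>{1..n}. a s \<noteq> b s) \<and>
      (let s = (GREATEST s. s \<in> {1..n} \<and> a s \<noteq> b s) in b s < a s))"

definition mon_le :: "nat \<Rightarrow> (nat \<Rightarrow> nat) \<Rightarrow> (nat \<Rightarrow> nat) \<Rightarrow> bool" where
  "mon_le n a b \<longleftrightarrow> a = b \<or> mon_less n a b"

definition monomial_ideal :: "nat \<Rightarrow> (nat \<Rightarrow> nat) set \<Rightarrow> bool" where
  "monomial_ideal n I \<longleftrightarrow> I \<subseteq> monomials n \<and>
     (\<forall>a\<in>I. \<forall>b\<in>monomials n. (\<forall>i. a i \<le> b i) \<longrightarrow> b \<in> I)"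

definition strongly_stable :: "nat \<Rightarrow> (nat \<Rightarrow> nat) set \<Rightarrow> bool" where
  "strongly_stable n I \<longleftrightarrow> (\<forall>a\<in>monomials n. \<forall>i j. 1 \<le> j \<and> j < i \<and> i \<le> n \<and>
       a(i := Suc (a i)) \<in> I \<longrightarrow> a(j := Suc (a j)) \<in> I)"

definition min_gens :: "(nat \<Rightarrow> nat) set \<Rightarrow> (nat \<Rightarrow> nat) set" where
  "min_gens I = {a \<in> I. \<not> (\<exists>b\<in>I. b \<noteq> a \<and> (\<forall>i. b i \<le> a i))}"

definition is_last_gen :: "nat \<Rightarrow> (nat \<Rightarrow> nat) set \<Rightarrow> (nat \<Rightarrow> nat) \<Rightarrow> bool" where
  "is_last_gen n I w \<longleftrightarrow> w \<in> min_gens I \<and>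
     (\<forall>b\<in>min_gens I. mdeg n b \<le> mdeg n w) \<and>
     (\<forall>b\<in>min_gens I. mdeg n b = mdeg n w \<longrightarrow> mon_le n w b)"

definition mon_of_list :: "nat list \<Rightarrow> nat \<Rightarrow> nat" where
  "mon_of_list al = (\<lambda>j. if 1 \<le> j \<and> j \<le> length al then al ! (j - 1) else 0)"

text \<open>f_i(alpha) = min{t. x^alpha x_i^t \<in> I} (infinity if empty); alpha has length i-1.
  For i = 1 and alpha = [] this is f_1.\<close>
definition fval :: "(nat \<Rightarrow> nat) set \<Rightarrow> nat \<Rightarrow> nat list \<Rightarrow> enat" where
  "fval I i al = (if \<exists>t. (mon_of_list al)(i := t) \<in> I
                  then enat (LEAST t. (mon_of_list al)(i := t) \<in> I) else \<infinity>)"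

text \<open>The set \<I>_i (without the extra condition for i = mu - 1).\<close>
definition Iset :: "(nat \<Rightarrow> nat) set \<Rightarrow> nat \<Rightarrow> nat list set" where
  "Iset I i = {al. length al = i \<and>
      (\<forall>j\<in>{1..i}. enat (al ! (j - 1)) < fval I j (take (j - 1) al))}"

definition Ilast :: "nat \<Rightarrow> (nat \<Rightarrow> nat) set \<Rightarrow> (nat \<Rightarrow> nat) \<Rightarrow> nat \<Rightarrow> nat list set" where
  "Ilast n I w mu = {al \<in> Iset I (mu - 1).
      mon_le n (mon_of_list (map w [1..<mu])) (mon_of_list al)}"

end

theory Submission
  imports Defs
begin

lemma sum_enat_eq: "(\<Sum>x\<in>A. enat (f x)) = enat (\<Sum>x\<in>A. f x)"
  by (induction A rule: infinite_finite_induct) (auto simp: zero_enat_def)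

lemma pow_in:
  assumes ss: "strongly_stable n I" and i: "1 \<le> i" "i \<le> n"
    and hi: "(\<lambda>_. 0)(i := t) \<in> I" and j: "1 \<le> j" "j \<le> i"
  shows "(\<lambda>_. 0)(j := t) \<in> I"
proof (cases "j = i")
  case True then show ?thesis using hi by simp
next
  case False
  then have ji: "j < i" using j by simp
  have "\<forall>k\<le>t. ((\<lambda>_. 0)(i := t - k, j := k) :: nat \<Rightarrow> nat) \<in> I"
  proof (intro allI impI)
    fix k assume "k \<le> t"
    then show "((\<lambda>_. 0)(i := t - k, j := k) :: nat \<Rightarrow> nat) \<in> I"
    proof (induction k)
      case 0
      have "((\<lambda>_. 0)(i := t - 0, j := 0) :: nat \<Rightarrow> nat) = (\<lambda>_. 0)(i := t)"
        using ji by (auto simp: fun_eq_iff)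
      then show ?case using hi by (simp only:)
    next
      case (Suc k)
      define a :: "nat \<Rightarrow> nat" where "a = (\<lambda>_. 0)(i := t - Suc k, j := k)"
      have am: "a \<in> monomials n" using i ji j unfolding a_def monomials_def by auto
      have eq: "a(i := Suc (a i)) = (\<lambda>_. 0)(i := t - k, j := k)"
        using Suc.prems ji unfolding a_def by (auto simp: fun_eq_iff Suc_diff_Suc)
      have "((\<lambda>_. 0)(i := t - k, j := k) :: nat \<Rightarrow> nat) \<in> I" using Suc.IH[OF Suc_leD[OF Suc.prems]] .
      then have "a(i := Suc (a i)) \<in> I" by (simp only: eq)
      then have "a(j := Suc (a j)) \<in> I" using ss am ji i j unfolding strongly_stable_def by blast
      moreover have eq2: "a(j := Suc (a j)) = (\<lambda>_. 0)(i := t - Suc k, j := Suc k)"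
        unfolding a_def by (auto simp: fun_eq_iff)
      ultimately show ?case by (simp only:)
    qed
  qed
  then have "((\<lambda>_. 0)(i := t - t, j := t) :: nat \<Rightarrow> nat) \<in> I" by blast
  moreover have "((\<lambda>_. 0)(i := t - t, j := t) :: nat \<Rightarrow> nat) = (\<lambda>_. 0)(j := t)"
    using ji by (auto simp: fun_eq_iff)
  ultimately show ?thesis by simp
qed

lemma mon_less_D: "mon_less n a b \<Longrightarrow>
  mdeg n a < mdeg n b \<or> (mdeg n a = mdeg n b \<and> (\<exists>s\<in>{1..n}. a s \<noteq> b s))"
  unfolding mon_less_def by (elim disjE conjE) simp_all

lemma mon_of_list_mon: "length q \<le> n \<Longrightarrow> mon_of_list q \<in> monomials n"
  unfolding mon_of_list_def monomials_def by auto

lemma fval_le: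
  assumes mi: "monomial_ideal n I" and hj: "(\<lambda>_. 0)(j := t) \<in> I"
    and j: "1 \<le> j" "j \<le> n" and q: "length q < j"
  shows "fval I j q \<le> enat t"
proof -
  have "(mon_of_list q)(j := t) \<in> I"
  proof -
    have "(mon_of_list q)(j := t) \<in> monomials n"
      using mon_of_list_mon[of q n] q j unfolding monomials_def by auto
    moreover have "\<forall>i. ((\<lambda>_. 0::nat)(j := t)) i \<le> ((mon_of_list q)(j := t)) i" by simp
    ultimately show ?thesis using mi hj unfolding monomial_ideal_def by blast
  qed
  then show ?thesis unfolding fval_def
    by (auto intro: Least_le)
qed

lemma Iset_bound:
  assumes mi: "monomial_ideal n I" and ss: "strongly_stable n I"
    and i: "1 \<le> i" "i \<le> n" and hi: "(\<lambda>_. 0)(i := t) \<in> I"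
    and k: "k \<le> i" and al: "al \<in> Iset I k"
  shows "set al \<subseteq> {..<t}"
proof
  fix x assume "x \<in> set al"
  then obtain p where p: "p < length al" "al ! p = x" by (auto simp: in_set_conv_nth)
  have len: "length al = k" using al unfolding Iset_def by auto
  define j where "j = Suc p"
  have j: "j \<in> {1..k}" using p len unfolding j_def by auto
  have lt: "enat (al ! (j - 1)) < fval I j (take (j - 1) al)" using al j unfolding Iset_def by auto
  have hj: "(\<lambda>_. 0)(j := t) \<in> I" using pow_in[OF ss i hi] j k by auto
  have fl: "fval I j (take (j - 1) al) \<le> enat t"
    by (rule fval_le[OF mi hj]) (use j k i in auto)
  have "enat (al ! (j - 1)) < enat t" using lt fl by (rule order_less_le_trans)
  then have "al ! p < t" unfolding j_def by simp
  then show "x \<in> {..<t}" using p by simp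
qed

lemma Iset_finite:
  assumes mi: "monomial_ideal n I" and ss: "strongly_stable n I"
    and i: "1 \<le> i" "i \<le> n" and hi: "(\<lambda>_. 0)(i := t) \<in> I"
    and k: "k \<le> i"
  shows "finite (Iset I k)"
proof -
  have "Iset I k \<subseteq> {xs. set xs \<subseteq> {..<t} \<and> length xs = k}"
    using Iset_bound[OF mi ss i hi k] unfolding Iset_def by auto
  then show ?thesis using finite_lists_length_eq[of "{..<t}" k] finite_subset by blast
qed

lemma Iset_Suc:
  "Iset I (Suc m) = (\<lambda>(al, b). al @ [b]) ` (SIGMA al:Iset I m. {b. enat b < fval I (Suc m) al})"
proof (intro equalityI subsetI)
  fix xs assume xs: "xs \<in> Iset I (Suc m)"
  then have len: "length xs = Suc m" unfolding Iset_def by auto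
  then have dec: "xs = take m xs @ [xs ! m]"
  proof -
    have "xs = take (Suc m) xs" using len by simp
    also have "\<dots> = take m xs @ [xs ! m]" by (rule take_Suc_conv_app_nth) (simp add: len)
    finally show ?thesis .
  qed
  have "take m xs \<in> Iset I m"
    unfolding Iset_def
  proof (intro CollectI conjI ballI)
    show "length (take m xs) = m" using len by simp
    fix j assume j: "j \<in> {1..m}"
    then have "enat (xs ! (j - 1)) < fval I j (take (j - 1) xs)" using xs unfolding Iset_def by auto
    moreover have "take m xs ! (j - 1) = xs ! (j - 1)" using j by (subst nth_take) auto
    moreover have "take (j - 1) (take m xs) = take (j - 1) xs" using j by (auto simp: min_def)
    ultimately show "enat (take m xs ! (j - 1)) < fval I j (take (j - 1) (take m xs))"
      by simp
  qed
  moreover have "enat (xs ! m) < fval I (Suc m) (take m xs)"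
  proof -
    have "\<forall>j\<in>{1..Suc m}. enat (xs ! (j - 1)) < fval I j (take (j - 1) xs)"
      using xs unfolding Iset_def by blast
    from bspec[OF this, of "Suc m"]
    have "enat (xs ! (Suc m - 1)) < fval I (Suc m) (take (Suc m - 1) xs)" by simp
    then show ?thesis by simp
  qed
  ultimately show "xs \<in> (\<lambda>(al, b). al @ [b]) ` (SIGMA al:Iset I m. {b. enat b < fval I (Suc m) al})"
    using dec by (intro image_eqI[where x="(take m xs, xs ! m)"]) auto
next
  fix xs assume "xs \<in> (\<lambda>(al, b). al @ [b]) ` (SIGMA al:Iset I m. {b. enat b < fval I (Suc m) al})"
  then obtain al b where al: "al \<in> Iset I m" and b: "enat b < fval I (Suc m) al" and xs: "xs = al @ [b]"
    by auto
  have len: "length al = m" using al unfolding Iset_def by auto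
  show "xs \<in> Iset I (Suc m)"
    unfolding Iset_def
  proof (intro CollectI conjI ballI)
    show "length xs = Suc m" using xs len by simp
    fix j assume j: "j \<in> {1..Suc m}"
    show "enat (xs ! (j - 1)) < fval I j (take (j - 1) xs)"
    proof (cases "j = Suc m")
      case True then show ?thesis using b xs len by (simp add: nth_append)
    next
      case False
      then have "j \<in> {1..m}" using j by auto
      then have "enat (al ! (j - 1)) < fval I j (take (j - 1) al)" using al unfolding Iset_def by auto
      then show ?thesis using xs len \<open>j \<in> {1..m}\<close> by (auto simp: nth_append)
    qed
  qed
qed

theorem lemma2p5:
  fixes n mu t :: nat and I :: "(nat \<Rightarrow> nat) set" and w :: "nat \<Rightarrow> nat"
  assumes "monomial_ideal n I"
    and "strongly_stable n I"
    and "is_last_gen n I w"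
    and "2 \<le> mu" and "mu \<le> n"
    and "w mu > 0" and "\<forall>i>mu. w i = 0"
    and "t > 0" and "(\<lambda>_. 0)(mu - 1 := t) \<in> I"
  shows "finite (Ilast n I w mu)
    \<and> enat (card (Ilast n I w mu)) \<le> (\<Sum>al\<in>Iset I (mu - 2). fval I (mu - 1) al)
    \<and> (enat (card (Ilast n I w mu)) = (\<Sum>al\<in>Iset I (mu - 2). fval I (mu - 1) al)
        \<longleftrightarrow> (\<forall>i\<in>{1..<mu}. w i = 0))"
proof -
  note mi = assms(1) and ss = assms(2)
  define m where "m = mu - 2"
  have mu1: "mu - 1 = Suc m" using assms(4) unfolding m_def by simp
  have i: "1 \<le> Suc m" "Suc m \<le> n" using assms(5) mu1 by auto
  have hi: "(\<lambda>_. 0)(Suc m := t) \<in> I" using assms(9) mu1 by simp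
  have finS: "finite (Iset I (Suc m))" by (rule Iset_finite[OF mi ss i hi]) simp
  have finM: "finite (Iset I m)" by (rule Iset_finite[OF mi ss i hi]) simp
  have Fle: "fval I (Suc m) al \<le> enat t" if "al \<in> Iset I m" for al
    by (rule fval_le[OF mi hi i]) (use that in \<open>auto simp: Iset_def\<close>)
  define f where "f al = the_enat (fval I (Suc m) al)" for al
  have Feq: "fval I (Suc m) al = enat (f al)" if "al \<in> Iset I m" for al
    using Fle[OF that] unfolding f_def by (cases "fval I (Suc m) al") auto
  have "card (Iset I (Suc m)) = card (SIGMA al:Iset I m. {b. enat b < fval I (Suc m) al})"
    unfolding Iset_Suc by (rule card_image) (auto simp: inj_on_def)
  also have "\<dots> = (\<Sum>al\<in>Iset I m. card {b. enat b < fval I (Suc m) al})"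
    by (rule card_SigmaI) (use finM Feq in auto)
  also have "\<dots> = (\<Sum>al\<in>Iset I m. f al)"
    by (rule sum.cong) (auto simp: Feq)
  finally have cardS: "enat (card (Iset I (Suc m))) = (\<Sum>al\<in>Iset I m. fval I (Suc m) al)"
    by (simp add: sum_enat_eq Feq)
  have sub: "Ilast n I w mu \<subseteq> Iset I (Suc m)" unfolding Ilast_def mu1 by auto
  have finL: "finite (Ilast n I w mu)" using sub finS finite_subset by blast
  have le: "card (Ilast n I w mu) \<le> card (Iset I (Suc m))" using card_mono[OF finS sub] .
  have eqiff: "Ilast n I w mu = Iset I (Suc m) \<longleftrightarrow> (\<forall>i\<in>{1..<mu}. w i = 0)"
  proof -
    define w' where "w' = mon_of_list (map w [1..<mu])"
    have w'v: "w' j = (if 1 \<le> j \<and> j < mu then w j else 0)" for j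
      unfolding w'_def mon_of_list_def using assms(4) by auto
    have mdeg0: "mdeg n a = 0 \<longleftrightarrow> (\<forall>i\<in>{1..n}. a i = 0)" for a
      by (simp add: mdeg_def)
    have zI: "(\<lambda>_. 0) \<notin> I"
    proof
      assume z: "(\<lambda>_. 0) \<in> I"
      have "w \<in> min_gens I" using assms(3) unfolding is_last_gen_def by auto
      moreover have "(\<lambda>_. 0) \<noteq> w" using assms(6) by auto
      ultimately show False using z unfolding min_gens_def by auto
    qed
    define z where "z = replicate (Suc m) (0::nat)"
    have mz: "mon_of_list (replicate k 0) = (\<lambda>_. 0)" for k
      unfolding mon_of_list_def by (auto simp: fun_eq_iff)
    have zS: "z \<in> Iset I (Suc m)"
      unfolding Iset_def
    proof (intro CollectI conjI ballI)
      show "length z = Suc m" unfolding z_def by simp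
      fix j assume j: "j \<in> {1..Suc m}"
      have tk: "take (j - 1) z = replicate (j - 1) 0" using j by (auto simp: z_def take_replicate min_def simp del: replicate_Suc)
      have zj: "z ! (j - 1) = 0" unfolding z_def using j by (intro nth_replicate) auto
      show "enat (z ! (j - 1)) < fval I j (take (j - 1) z)"
      proof (cases "\<exists>t. (\<lambda>_. 0::nat)(j := t) \<in> I")
        case True
        have "(LEAST t. (\<lambda>_. 0::nat)(j := t) \<in> I) \<noteq> 0"
        proof
          assume "(LEAST t. (\<lambda>_. 0::nat)(j := t) \<in> I) = 0"
          with LeastI_ex[OF True] have "(\<lambda>_. 0::nat)(j := 0) \<in> I" by simp
          moreover have "(\<lambda>_. 0::nat)(j := 0) = (\<lambda>_. 0)" by (simp add: fun_eq_iff)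
          ultimately have "(\<lambda>_. 0::nat) \<in> I" by (simp only:)
          then show False using zI by contradiction
        qed
        then show ?thesis using True unfolding fval_def tk mz zj
          by (simp add: zero_enat_def)
      next
        case False
        then show ?thesis unfolding fval_def tk mz zj by (simp add: zero_enat_def)
      qed
    qed
    show ?thesis
    proof
      assume eq: "Ilast n I w mu = Iset I (Suc m)"
      then have "z \<in> Ilast n I w mu" using zS by simp
      then have "mon_le n w' (mon_of_list z)" unfolding Ilast_def w'_def by blast
      moreover have "mon_of_list z = (\<lambda>_. 0)" unfolding z_def by (rule mz)
      ultimately have ml0: "mon_le n w' (\<lambda>_. 0)" by (simp only:)
      have md0: "mdeg n (\<lambda>_. 0) = 0" by (simp add: mdeg_def)
      have nml: "\<not> mon_less n w' (\<lambda>_. 0)"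
      proof
        assume ml: "mon_less n w' (\<lambda>_. 0)"
        from mon_less_D[OF ml] md0 have "mdeg n w' = 0 \<and> (\<exists>s\<in>{1..n}. w' s \<noteq> 0)" by simp
        then obtain s where s: "s \<in> {1..n}" "w' s \<noteq> 0" and d: "mdeg n w' = 0" by blast
        from d have "\<forall>i\<in>{1..n}. w' i = 0" by (simp only: mdeg0)
        then have "w' s = 0" using s(1) by (rule bspec)
        with s(2) show False by contradiction
      qed
      from ml0 nml have "w' = (\<lambda>_. 0)" unfolding mon_le_def by (simp only: simp_thms)
      show "\<forall>i\<in>{1..<mu}. w i = 0"
      proof
        fix i assume "i \<in> {1..<mu}"
        then have "w' i = w i" using w'v by simp
        then show "w i = 0" using \<open>w' = (\<lambda>_. 0)\<close> by simp
      qed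
    next
      assume h: "\<forall>i\<in>{1..<mu}. w i = 0"
      have w0: "w' = (\<lambda>_. 0)"
      proof (rule ext)
        fix j show "w' j = 0" using h by (auto simp: w'v)
      qed
      show "Ilast n I w mu = Iset I (Suc m)"
      proof (intro equalityI[OF sub] subsetI)
        fix al assume al: "al \<in> Iset I (Suc m)"
        have len: "length al \<le> n" using al i unfolding Iset_def by auto
        have "mon_le n w' (mon_of_list al)"
        proof (cases "mon_of_list al = (\<lambda>_. 0)")
          case True then show ?thesis using w0 unfolding mon_le_def by (intro disjI1) simp
        next
          case False
          then obtain s where s: "mon_of_list al s \<noteq> 0" by auto
          then have "s \<in> {1..n}" using len unfolding mon_of_list_def by (auto split: if_splits)
          then have "mdeg n (mon_of_list al) \<noteq> 0"
          proof -
            assume sn: "s \<in> {1..n}"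
            show ?thesis
            proof
              assume "mdeg n (mon_of_list al) = 0"
              then have "\<forall>i\<in>{1..n}. mon_of_list al i = 0" by (simp only: mdeg0)
              then have "mon_of_list al s = 0" using sn by (rule bspec)
              with s show False by contradiction
            qed
          qed
          moreover have "mdeg n w' = 0" unfolding w0 by (simp add: mdeg_def)
          ultimately have "mdeg n w' < mdeg n (mon_of_list al)" by simp
          then show ?thesis unfolding mon_le_def mon_less_def by (intro disjI2 disjI1)
        qed
        then show "al \<in> Ilast n I w mu" using al unfolding Ilast_def w'_def mu1 by blast
      qed
    qed
  qed
  have "card (Ilast n I w mu) = card (Iset I (Suc m)) \<longleftrightarrow> Ilast n I w mu = Iset I (Suc m)"
    using card_subset_eq[OF finS sub] by auto
  moreover have S: "(\<Sum>al\<in>Iset I (mu - 2). fval I (mu - 1) al) = enat (card (Iset I (Suc m)))"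
    using cardS mu1 unfolding m_def by simp
  ultimately show ?thesis using finL le eqiff unfolding S by simp
qed

end
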